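(* Let $\varphi:\mathcal{P}(\mathbf{N})\to[0,\infty]$ be a lower semicontinuous submeasure, and set $\|A\|_\varphi=\lim_{n}\varphi(A\setminus[1,n])$ for $A\subseteq\mathbf{N}$. Suppose $\|\mathbf{N}\|_\varphi=1$ and that $\mathcal{I}=\mathrm{Exh}(\varphi):=\{A\subseteq\mathbf{N}:\|A\|_\varphi=0\}$ is an analytic P-ideal. Then there exists a normalized capacity $\rho:\mathscr{B}(\mathrm{Ult}(\mathcal{I}))\to\mathbf{R}$ such that for every $A\subseteq\mathbf{N}$, $$\|A\|_\varphi=\int_{\mathrm{Ult}(\mathcal{I})}\mu_{\mathcal{F}}(A)\,\mathrm{d}\rho(\mathcal{F}).$$
   Context: A submeasure is $\varphi:\mathcal{P}(\mathbf{N})\to[0,\infty]$ with $\varphi(\emptyset)=0$, monotone and subadditive ($\varphi(A\cup B)\le\varphi(A)+\varphi(B)$); it is lower semicontinuous if $\varphi(A)=\lim_n\varphi(A\cap[1,n])$ for all $A$. An ideal on $\mathbf{N}$ is a family closed under subsets and finite unions, not containing $\mathbf{N}$, and containing all finite sets; it is a P-ideal if for every sequence $(A_n)$ in $\mathcal{I}$ there is $A\in\mathcal{I}$ with $A_n\setminus A$ finite for all $n$; analytic means analytic as a subset of the Cantor space $\{0,1\}^{\mathbf{N}}$. $\mathrm{Ult}(\mathcal{I})$ is the set of ultrafilters on $\mathbf{N}$ containing the dual filter $\{A:\mathbf{N}\setminus A\in\mathcal{I}\}$, with topology induced from $\beta\mathbf{N}$ (basic clopen sets $\{\mathcal{F}:A\in\mathcal{F}\}$);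 $\mathscr{B}$ denotes the Borel $\sigma$-algebra; $\mu_{\mathcal{F}}(A)=1$ if $A\in\mathcal{F}$, else $0$. A normalized capacity is a monotone set function with value $0$ at $\emptyset$ and $1$ at the whole space; the integral is the Choquet integral $\int_0^\infty\rho(f\ge t)\,\mathrm{d}t+\int_{-\infty}^0[\rho(f\ge t)-1]\,\mathrm{d}t$. *)

theory Defs
  imports "HOL-Analysis.Analysis"
begin

text \<open>The natural numbers N are modelled by the type nat; initial segments [1,n]
  are modelled by {..<n} (same limits).\<close>

definition submeasure :: "(nat set \<Rightarrow> ennreal) \<Rightarrow> bool" where
  "submeasure \<phi> \<longleftrightarrow> \<phi> {} = 0 \<and> (\<forall>A B. A \<subseteq> B \<longrightarrow> \<phi> A \<le> \<phi> B)
     \<and> (\<forall>A B. \<phi> (A \<union> B) \<le> \<phi> A + \<phi> B)"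

definition lsc_submeasure :: "(nat set \<Rightarrow> ennreal) \<Rightarrow> bool" where
  "lsc_submeasure \<phi> \<longleftrightarrow> submeasure \<phi> \<and>
     (\<forall>A. (\<lambda>n. \<phi> (A \<inter> {..<n})) \<longlonglongrightarrow> \<phi> A)"

definition exh_norm :: "(nat set \<Rightarrow> ennreal) \<Rightarrow> nat set \<Rightarrow> ennreal" where
  "exh_norm \<phi> A = lim (\<lambda>n. \<phi> (A - {..<n}))"

definition Exh :: "(nat set \<Rightarrow> ennreal) \<Rightarrow> nat set set" where
  "Exh \<phi> = {A. exh_norm \<phi> A = 0}"

definition is_ideal :: "nat set set \<Rightarrow> bool" where
  "is_ideal \<I> \<longleftrightarrow> (\<forall>A B. A \<in> \<I> \<longrightarrow> B \<subseteq> A \<longrightarrow> B \<in> \<I>)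
     \<and> (\<forall>A B. A \<in> \<I> \<longrightarrow> B \<in> \<I> \<longrightarrow> A \<union> B \<in> \<I>)
     \<and> UNIV \<notin> \<I> \<and> (\<forall>A. finite A \<longrightarrow> A \<in> \<I>)"

definition is_P_ideal :: "nat set set \<Rightarrow> bool" where
  "is_P_ideal \<I> \<longleftrightarrow> is_ideal \<I> \<and>
     (\<forall>An :: nat \<Rightarrow> nat set. (\<forall>n. An n \<in> \<I>) \<longrightarrow>
        (\<exists>A\<in>\<I>. \<forall>n. finite (An n - A)))"

text \<open>Analytic subsets of the Cantor space nat => bool (product topology):
  empty, or a continuous image of the Baire space nat => nat.\<close>
definition analytic :: "(nat \<Rightarrow> bool) set \<Rightarrow> bool" where
  "analytic S \<longleftrightarrow> S = {} \<or>
     (\<exists>f :: (nat \<Rightarrow> nat) \<Rightarrow> (nat \<Rightarrow> bool). continuous_on UNIV f \<and> range f = S)"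

definition analytic_family :: "nat set set \<Rightarrow> bool" where
  "analytic_family \<I> \<longleftrightarrow> analytic ((\<lambda>A n. n \<in> A) ` \<I>)"

definition ultrafilter_on_nat :: "nat set set \<Rightarrow> bool" where
  "ultrafilter_on_nat F \<longleftrightarrow> UNIV \<in> F \<and> {} \<notin> F
     \<and> (\<forall>A B. A \<in> F \<longrightarrow> A \<subseteq> B \<longrightarrow> B \<in> F)
     \<and> (\<forall>A B. A \<in> F \<longrightarrow> B \<in> F \<longrightarrow> A \<inter> B \<in> F)
     \<and> (\<forall>A. A \<in> F \<or> - A \<in> F)"

definition Ult :: "nat set set \<Rightarrow> nat set set set" where
  "Ult \<I> = {F. ultrafilter_on_nat F \<and> {A. - A \<in> \<I>} \<subseteq> F}"

text \<open>Topology on Ult(I) induced from beta N: generated by the basic clopen sets.\<close>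
definition ult_top :: "nat set set \<Rightarrow> nat set set topology" where
  "ult_top \<I> = topology_generated_by {{F \<in> Ult \<I>. A \<in> F} | A. True}"

definition ult_borel :: "nat set set \<Rightarrow> nat set set set set" where
  "ult_borel \<I> = sigma_sets (Ult \<I>) {U. openin (ult_top \<I>) U}"

definition normalized_capacity :: "'a set \<Rightarrow> 'a set set \<Rightarrow> ('a set \<Rightarrow> real) \<Rightarrow> bool" where
  "normalized_capacity \<Omega> \<Sigma> \<rho> \<longleftrightarrow> \<rho> {} = 0 \<and> \<rho> \<Omega> = 1 \<and>
     (\<forall>A\<in>\<Sigma>. \<forall>B\<in>\<Sigma>. A \<subseteq> B \<longrightarrow> \<rho> A \<le> \<rho> B)"

definition choquet_integral :: "'a set \<Rightarrow> ('a set \<Rightarrow> real) \<Rightarrow> ('a \<Rightarrow> real) \<Rightarrow> real" where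
  "choquet_integral \<Omega> \<rho> f =
     (LBINT t:{0..}. \<rho> {x \<in> \<Omega>. f x \<ge> t}) + (LBINT t:{..0}. \<rho> {x \<in> \<Omega>. f x \<ge> t} - 1)"

definition dirac_ult :: "nat set set \<Rightarrow> nat set \<Rightarrow> real" where
  "dirac_ult F A = (if A \<in> F then 1 else 0)"

end

theory Submission
  imports Defs
begin

lemma exh_INF:
  assumes "submeasure \<phi>"
  shows "exh_norm \<phi> A = (INF n. \<phi> (A - {..<n}))"
proof -
  have mono: "\<And>X Y. X \<subseteq> Y \<Longrightarrow> \<phi> X \<le> \<phi> Y" using assms unfolding submeasure_def by blast
  have "antimono (\<lambda>n. \<phi> (A - {..<n}))"
    by (rule antimonoI, rule mono, auto)
  hence "(\<lambda>n. \<phi> (A - {..<n})) \<longlonglongrightarrow> (INF n. \<phi> (A - {..<n}))"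
    using LIMSEQ_INF by blast
  thus ?thesis unfolding exh_norm_def by (rule limI)
qed

lemma exh_tendsto:
  assumes "submeasure \<phi>"
  shows "(\<lambda>n. \<phi> (A - {..<n})) \<longlonglongrightarrow> exh_norm \<phi> A"
proof -
  have mono: "\<And>X Y. X \<subseteq> Y \<Longrightarrow> \<phi> X \<le> \<phi> Y" using assms unfolding submeasure_def by blast
  have "antimono (\<lambda>n. \<phi> (A - {..<n}))"
    by (rule antimonoI, rule mono, auto)
  hence "(\<lambda>n. \<phi> (A - {..<n})) \<longlonglongrightarrow> (INF n. \<phi> (A - {..<n}))"
    using LIMSEQ_INF by blast
  thus ?thesis using exh_INF[OF assms] by simp
qed

lemma exh_mono:
  assumes "submeasure \<phi>" "A \<subseteq> B"
  shows "exh_norm \<phi> A \<le> exh_norm \<phi> B"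
proof -
  have mono: "\<And>X Y. X \<subseteq> Y \<Longrightarrow> \<phi> X \<le> \<phi> Y" using assms unfolding submeasure_def by blast
  show ?thesis unfolding exh_INF[OF assms(1)]
    by (intro INF_mono') (rule mono, use assms(2) in blast)
qed

lemma exh_sub:
  assumes "submeasure \<phi>"
  shows "exh_norm \<phi> (A \<union> B) \<le> exh_norm \<phi> A + exh_norm \<phi> B"
proof -
  have sub: "\<And>X Y. \<phi> (X \<union> Y) \<le> \<phi> X + \<phi> Y" using assms unfolding submeasure_def by blast
  have "(\<lambda>n. \<phi> (A - {..<n}) + \<phi> (B - {..<n})) \<longlonglongrightarrow> exh_norm \<phi> A + exh_norm \<phi> B"
    by (intro tendsto_add exh_tendsto assms)
  moreover have "\<And>n. \<phi> ((A \<union> B) - {..<n}) \<le> \<phi> (A - {..<n}) + \<phi> (B - {..<n})"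
  proof -
    fix n
    have "(A \<union> B) - {..<n} = (A - {..<n}) \<union> (B - {..<n})" by auto
    thus "\<phi> ((A \<union> B) - {..<n}) \<le> \<phi> (A - {..<n}) + \<phi> (B - {..<n})" using sub by simp
  qed
  ultimately show ?thesis
    using LIMSEQ_le[OF exh_tendsto[OF assms, of "A \<union> B"]] by blast
qed

definition pfilter :: "nat set set \<Rightarrow> bool" where
  "pfilter G \<longleftrightarrow> UNIV \<in> G \<and> {} \<notin> G \<and> (\<forall>A B. A \<in> G \<longrightarrow> A \<subseteq> B \<longrightarrow> B \<in> G)
     \<and> (\<forall>A B. A \<in> G \<longrightarrow> B \<in> G \<longrightarrow> A \<inter> B \<in> G)"

lemma ultra_exists:
  assumes "pfilter G0"
  shows "\<exists>F. ultrafilter_on_nat F \<and> G0 \<subseteq> F"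
proof -
  let ?P = "{G. pfilter G \<and> G0 \<subseteq> G}"
  have "\<forall>C\<in>chains ?P. \<exists>U\<in>?P. \<forall>X\<in>C. X \<subseteq> U"
  proof
    fix C assume C: "C \<in> chains ?P"
    show "\<exists>U\<in>?P. \<forall>X\<in>C. X \<subseteq> U"
    proof (cases "C = {}")
      case True thus ?thesis using assms by blast
    next
      case False
      have CP: "C \<subseteq> ?P" and ch: "\<forall>X\<in>C. \<forall>Y\<in>C. X \<subseteq> Y \<or> Y \<subseteq> X"
        using C unfolding chains_def chain_subset_def by auto
      have "pfilter (\<Union>C)"
        unfolding pfilter_def
      proof (intro conjI allI impI)
        show "UNIV \<in> \<Union>C" using False CP unfolding pfilter_def by blast
        show "{} \<notin> \<Union>C" using CP unfolding pfilter_def by blast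
      next
        fix A B assume "A \<in> \<Union>C" "A \<subseteq> B"
        thus "B \<in> \<Union>C" using CP unfolding pfilter_def by blast
      next
        fix A B assume a: "A \<in> \<Union>C" and b: "B \<in> \<Union>C"
        then obtain X Y where X: "X \<in> C" "A \<in> X" and Y: "Y \<in> C" "B \<in> Y" by blast
        from ch X Y have "X \<subseteq> Y \<or> Y \<subseteq> X" by blast
        thus "A \<inter> B \<in> \<Union>C"
        proof
          assume "X \<subseteq> Y" hence "A \<inter> B \<in> Y" using X Y CP unfolding pfilter_def by blast
          thus ?thesis using Y by blast
        next
          assume "Y \<subseteq> X" hence "A \<inter> B \<in> X" using X Y CP unfolding pfilter_def by blast
          thus ?thesis using X by blast
        qed
      qed
      moreover have "G0 \<subseteq> \<Union>C" using False CP by blast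
      ultimately show ?thesis by blast
    qed
  qed
  then obtain M where M: "M \<in> ?P" and max: "\<forall>X\<in>?P. M \<subseteq> X \<longrightarrow> X = M"
    using Zorn_Lemma2[of ?P] by blast
  have "\<forall>A. A \<in> M \<or> - A \<in> M"
  proof (rule ccontr)
    assume "\<not> (\<forall>A. A \<in> M \<or> - A \<in> M)"
    then obtain X where nX: "X \<notin> M" "- X \<notin> M" by blast
    have pf: "pfilter M" using M by blast
    let ?M' = "{Y. \<exists>Z\<in>M. Z \<inter> X \<subseteq> Y}"
    have "pfilter ?M'"
      unfolding pfilter_def
    proof (intro conjI allI impI)
      show "UNIV \<in> ?M'" using pf unfolding pfilter_def by blast
      show "{} \<notin> ?M'"
      proof
        assume "{} \<in> ?M'"
        then obtain Z where "Z \<in> M" "Z \<inter> X \<subseteq> {}" by blast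
        hence "Z \<subseteq> - X" by blast
        hence "- X \<in> M" using \<open>Z \<in> M\<close> pf unfolding pfilter_def by blast
        thus False using nX by blast
      qed
    next
      fix A B assume "A \<in> ?M'" "A \<subseteq> B" thus "B \<in> ?M'" by blast
    next
      fix A B assume "A \<in> ?M'" "B \<in> ?M'"
      then obtain Z1 Z2 where "Z1 \<in> M" "Z1 \<inter> X \<subseteq> A" "Z2 \<in> M" "Z2 \<inter> X \<subseteq> B" by blast
      moreover hence "Z1 \<inter> Z2 \<in> M" using pf unfolding pfilter_def by blast
      ultimately show "A \<inter> B \<in> ?M'" by blast
    qed
    moreover have "M \<subseteq> ?M'" by (auto intro: bexI[where x="_"])
    moreover have "G0 \<subseteq> M" using M by blast
    ultimately have "?M' \<in> ?P" by blast
    hence "?M' = M" using max \<open>M \<subseteq> ?M'\<close> by (rule_tac max[rule_format]) auto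
    moreover have "X \<in> ?M'" using pf unfolding pfilter_def by blast
    ultimately show False using nX by blast
  qed
  moreover have "pfilter M" using M by blast
  ultimately have "ultrafilter_on_nat M" unfolding ultrafilter_on_nat_def pfilter_def by (elim conjE) (intro conjI; assumption)
  thus ?thesis using M by blast
qed

lemma key:
  assumes sm: "submeasure \<phi>" and id: "is_ideal (Exh \<phi>)"
    and sub: "{F \<in> Ult (Exh \<phi>). A \<in> F} \<subseteq> {F \<in> Ult (Exh \<phi>). B \<in> F}"
  shows "exh_norm \<phi> A \<le> exh_norm \<phi> B"
proof -
  let ?I = "Exh \<phi>"
  have dn: "\<And>X Y. X \<in> ?I \<Longrightarrow> Y \<subseteq> X \<Longrightarrow> Y \<in> ?I" using id unfolding is_ideal_def by blast
  have un: "\<And>X Y. X \<in> ?I \<Longrightarrow> Y \<in> ?I \<Longrightarrow> X \<union> Y \<in> ?I" using id unfolding is_ideal_def by blast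
  have fin: "\<And>X. finite X \<Longrightarrow> X \<in> ?I" using id unfolding is_ideal_def by blast
  have "A - B \<in> ?I"
  proof (rule ccontr)
    assume nC: "A - B \<notin> ?I"
    let ?C = "A - B"
    let ?G = "{X. ?C - X \<in> ?I}"
    have "pfilter ?G"
      unfolding pfilter_def
    proof (intro conjI allI impI)
      show "UNIV \<in> ?G" using fin by simp
      show "{} \<notin> ?G" using nC by simp
    next
      fix X Y assume "X \<in> ?G" "X \<subseteq> Y" thus "Y \<in> ?G" using dn[of "?C - X" "?C - Y"] by blast
    next
      fix X Y assume "X \<in> ?G" "Y \<in> ?G"
      hence "(?C - X) \<union> (?C - Y) \<in> ?I" using un by blast
      moreover have "?C - (X \<inter> Y) = (?C - X) \<union> (?C - Y)" by blast
      ultimately show "X \<inter> Y \<in> ?G" by simp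
    qed
    then obtain F where F: "ultrafilter_on_nat F" "?G \<subseteq> F" using ultra_exists by blast
    have "{X. - X \<in> ?I} \<subseteq> ?G"
    proof
      fix X assume "X \<in> {X. - X \<in> ?I}"
      hence "- X \<in> ?I" by simp
      thus "X \<in> ?G" using dn[of "- X" "?C - X"] by blast
    qed
    hence FU: "F \<in> Ult ?I" using F unfolding Ult_def by blast
    have "?C \<in> ?G" using fin by simp
    hence CF: "?C \<in> F" using F by blast
    hence "A \<in> F" using F(1) unfolding ultrafilter_on_nat_def by blast
    hence "B \<in> F" using sub FU by blast
    hence "?C \<inter> B \<in> F" using CF F(1) unfolding ultrafilter_on_nat_def by blast
    moreover have "?C \<inter> B = {}" by blast
    ultimately show False using F(1) unfolding ultrafilter_on_nat_def by simp
  qed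
  hence z: "exh_norm \<phi> (A - B) = 0" unfolding Exh_def by simp
  have "exh_norm \<phi> A \<le> exh_norm \<phi> ((A - B) \<union> B)" by (rule exh_mono[OF sm], blast)
  also have "\<dots> \<le> exh_norm \<phi> (A - B) + exh_norm \<phi> B" by (rule exh_sub[OF sm])
  finally show ?thesis using z by simp
qed

lemma choquet_01:
  fixes \<rho> :: "'a set \<Rightarrow> real"
  assumes "\<rho> \<Omega> = 1" "\<rho> {} = 0"
  shows "choquet_integral \<Omega> \<rho> (\<lambda>x. if x \<in> U then 1 else 0) = \<rho> {x \<in> \<Omega>. x \<in> U}"
proof -
  let ?r = "\<rho> {x \<in> \<Omega>. x \<in> U}"
  have e1: "(\<lambda>t::real. indicator {0..} t * \<rho> {x \<in> \<Omega>. (if x \<in> U then 1 else 0) \<ge> t})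
        = (\<lambda>t. ?r * indicator {0<..1} t + indicator {0} t)"
  proof
    fix t :: real
    show "indicator {0..} t * \<rho> {x \<in> \<Omega>. (if x \<in> U then 1 else 0) \<ge> t}
        = ?r * indicator {0<..1} t + indicator {0} t"
    proof (cases "t < 0")
      case True thus ?thesis by (simp add: indicator_def)
    next
      case f1: False
      show ?thesis
      proof (cases "t = 0")
        case True
        have "{x \<in> \<Omega>. (if x \<in> U then 1 else 0) \<ge> (0::real)} = \<Omega>" by auto
        thus ?thesis using True assms by (simp add: indicator_def)
      next
        case f2: False
        show ?thesis
        proof (cases "t \<le> 1")
          case True
          have "{x \<in> \<Omega>. (if x \<in> U then 1 else 0) \<ge> t} = {x \<in> \<Omega>. x \<in> U}"
            using True f1 f2 by auto
          thus ?thesis using True f1 f2 by (simp add: indicator_def)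
        next
          case False
          have "{x \<in> \<Omega>. (if x \<in> U then 1 else 0) \<ge> t} = {}"
            using False by auto
          thus ?thesis using False f1 f2 assms by (simp add: indicator_def)
        qed
      qed
    qed
  qed
  have e2: "(\<lambda>t::real. indicator {..0} t * (\<rho> {x \<in> \<Omega>. (if x \<in> U then 1 else 0) \<ge> t} - 1)) = (\<lambda>t. 0::real)"
  proof
    fix t :: real
    show "indicator {..0} t * (\<rho> {x \<in> \<Omega>. (if x \<in> U then 1 else 0) \<ge> t} - 1) = 0"
    proof (cases "t \<le> 0")
      case True
      hence "{x \<in> \<Omega>. (if x \<in> U then 1 else 0) \<ge> t} = \<Omega>" by auto
      thus ?thesis using assms by simp
    next
      case False thus ?thesis by (simp add: indicator_def)
    qed
  qed
  have i1: "integrable lborel (indicat_real {0<..(1::real)})"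
    by (rule integrable_real_indicator) auto
  have i2: "integrable lborel (indicat_real {0::real})"
    by (rule integrable_real_indicator) auto
  have i3: "integrable lborel (\<lambda>t. ?r * indicator {0<..(1::real)} t)"
    using i1 by simp
  have "(LINT t|lborel. ?r * indicator {0<..1} (t::real) + indicator {0} t)
     = (LINT t|lborel. ?r * indicator {0<..1} (t::real)) + (LINT t|lborel. indicator {0::real} t)"
    by (rule Bochner_Integration.integral_add[OF i3 i2])
  also have "\<dots> = ?r * measure lborel {0<..(1::real)} + measure lborel {0::real}"
    by (simp add: integral_indicator)
  also have "\<dots> = ?r" by simp
  finally have "(LINT t|lborel. ?r * indicator {0<..1} (t::real) + indicator {0} t) = ?r" .
  thus ?thesis unfolding choquet_integral_def set_lebesgue_integral_def
    using e1 e2 by simp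
qed

theorem corollary1p3:
  fixes \<phi> :: "nat set \<Rightarrow> ennreal"
  assumes "lsc_submeasure \<phi>"
    and "exh_norm \<phi> UNIV = 1"
    and "is_P_ideal (Exh \<phi>)"
    and "analytic_family (Exh \<phi>)"
  shows "\<exists>\<rho> :: nat set set set \<Rightarrow> real.
           normalized_capacity (Ult (Exh \<phi>)) (ult_borel (Exh \<phi>)) \<rho> \<and>
           (\<forall>A. exh_norm \<phi> A =
              ennreal (choquet_integral (Ult (Exh \<phi>)) \<rho> (\<lambda>F. dirac_ult F A)))"
proof -
  let ?I = "Exh \<phi>"
  let ?U = "\<lambda>A. {F \<in> Ult ?I. A \<in> F}"
  have sm: "submeasure \<phi>" using assms(1) unfolding lsc_submeasure_def by blast
  have id: "is_ideal ?I" using assms(3) unfolding is_P_ideal_def by blast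
  define \<sigma> where "\<sigma> S = (SUP A\<in>{A. ?U A \<subseteq> S}. exh_norm \<phi> A)" for S
  define \<rho> where "\<rho> S = enn2real (\<sigma> S)" for S
  have le1: "\<And>A. exh_norm \<phi> A \<le> 1" using exh_mono[OF sm, of _ UNIV] assms(2) by auto
  have s1: "\<sigma> S \<le> 1" for S unfolding \<sigma>_def by (rule SUP_least, rule le1)
  have sU: "\<sigma> (?U A) = exh_norm \<phi> A" for A
  proof (rule antisym)
    show "\<sigma> (?U A) \<le> exh_norm \<phi> A" unfolding \<sigma>_def
      by (rule SUP_least, rule key[OF sm id], simp)
    show "exh_norm \<phi> A \<le> \<sigma> (?U A)" unfolding \<sigma>_def
      by (rule SUP_upper, simp)
  qed
  have e0: "exh_norm \<phi> {} = 0" using sm unfolding exh_INF[OF sm] submeasure_def by simp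
  have s0: "\<sigma> {} = 0"
  proof -
    have "\<sigma> {} \<le> 0" unfolding \<sigma>_def
    proof (rule SUP_least)
      fix A assume "A \<in> {A. ?U A \<subseteq> {}}"
      hence "?U A \<subseteq> ?U {}" by auto
      thus "exh_norm \<phi> A \<le> 0" using key[OF sm id] e0 by metis
    qed
    thus ?thesis by simp
  qed
  have UU: "?U UNIV = Ult ?I" unfolding Ult_def ultrafilter_on_nat_def by auto
  have sO: "\<sigma> (Ult ?I) = 1" using sU[of UNIV] UU assms(2) by simp
  have smono: "S \<subseteq> T \<Longrightarrow> \<sigma> S \<le> \<sigma> T" for S T
    unfolding \<sigma>_def by (rule SUP_subset_mono) auto
  have fin: "\<sigma> S < top" for S using s1[of S] by (simp add: order_le_less_trans)
  have nc: "normalized_capacity (Ult ?I) (ult_borel ?I) \<rho>"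
    unfolding normalized_capacity_def \<rho>_def using s0 sO
    by (auto intro!: enn2real_mono smono fin)
  have "exh_norm \<phi> A = ennreal (choquet_integral (Ult ?I) \<rho> (\<lambda>F. dirac_ult F A))" for A
  proof -
    have "choquet_integral (Ult ?I) \<rho> (\<lambda>F. dirac_ult F A)
        = choquet_integral (Ult ?I) \<rho> (\<lambda>F. if F \<in> {F. A \<in> F} then 1 else 0)"
      unfolding dirac_ult_def by simp
    also have "\<dots> = \<rho> {F \<in> Ult ?I. F \<in> {F. A \<in> F}}"
      by (rule choquet_01) (use s0 sO in \<open>auto simp: \<rho>_def\<close>)
    also have "\<dots> = enn2real (exh_norm \<phi> A)" unfolding \<rho>_def using sU[of A] by simp
    finally show ?thesis using fin[of "?U A"] sU[of A] by (simp add: ennreal_enn2real)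
  qed
  thus ?thesis using nc by blast
qed

end
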